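(* Consider the sig-cGA with parameter $\varepsilon>3$ optimizing $\mathrm{DLB}:\{0,1\}^n\to\mathbb{R}$. For any $k$, the probability that during the first $k$ iterations at least one frequency decreases is at most $k n^{1-\varepsilon/3}\log_2 k$.
   Context: Let $n$ be an even positive integer. For $x\in\{0,1\}^n$ consider the blocks $(x_{2\ell+1},x_{2\ell+2})$, $\ell=0,\dots,\frac n2-1$. If $x\neq(1,\dots,1)$, let $m$ be the smallest $\ell$ with $x_{2\ell+1}\neq 1$ or $x_{2\ell+2}\neq 1$, and define $\mathrm{DLB}(x)=2m+1$ if $x_{2m+1}+x_{2m+2}=0$ and $\mathrm{DLB}(x)=2m$ if $x_{2m+1}+x_{2m+2}=1$; set $\mathrm{DLB}(1,\dots,1)=n$. Significance function: for $\varepsilon,\mu>0$ let $s(\varepsilon,\mu)=\varepsilon\max\{\sqrt{\mu\log n},\log n\}$. For $H\in\{0,1\}^*$, $H[k]$ denotes the string of its last $k$ bits and $\|H[k]\|_0$, $\|H[k]\|_1$ the numbers of zeros and ones in it. For $p\in\{\frac1n,\frac12,1-\frac1n\}$, $\mathrm{sig}_\varepsilon(p,H)=\textsc{up}$ if $p\in\{\frac1n,\frac12\}$ and there is $m\in\mathbb{N}$ with $\|H[2^m]\|_1\ge 2^m p+s(\varepsilon,2^m p)$; $=\textsc{down}$ if $p\in\{\frac12,1-\frac1n\}$ and there is $m\in\mathbb{N}$ with $\|H[2^m]\|_0\ge 2^m(1-p)+s(\varepsilon,2^m(1-p))$; and $=\textsc{stay}$ otherwise. The sig-cGA with parameter $\varepsilon$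 maximizing $f$: initially $\tau^{(0)}_i=\frac12$ and $H_i=\emptyset$ for all $i\in[1..n]$. In iteration $t$, sample two individuals $x,y$ independently, each bit $j$ being $1$ independently with probability $\tau^{(t)}_j$; let the winner $z$ be the one with larger $f$-value (chosen uniformly at random in case of a tie). For each $i$: append $z_i$ to $H_i$; if $\mathrm{sig}_\varepsilon(\tau^{(t)}_i,H_i)=\textsc{up}$ set $\tau^{(t+1)}_i=1-\frac1n$, if it is $\textsc{down}$ set $\tau^{(t+1)}_i=\frac1n$, otherwise $\tau^{(t+1)}_i=\tau^{(t)}_i$; if $\tau^{(t+1)}_i\ne\tau^{(t)}_i$, reset $H_i=\emptyset$. A frequency decreases in iteration $t$ if $\tau^{(t+1)}_i<\tau^{(t)}_i$ for some $i$. *)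

theory Defs
  imports "HOL-Probability.Probability"
begin

text \<open>Bit strings of length n are bool lists (True = 1); bit x_i of the paper is x ! (i-1).\<close>

definition DLB :: "nat \<Rightarrow> bool list \<Rightarrow> nat" where
  "DLB n x = (if (\<forall>i<n. x ! i) then n else
     (let m = (LEAST l. l < n div 2 \<and> \<not> (x ! (2*l) \<and> x ! (2*l+1))) in
      if \<not> x ! (2*m) \<and> \<not> x ! (2*m+1) then 2*m+1 else 2*m))"

definition sfun :: "nat \<Rightarrow> real \<Rightarrow> real \<Rightarrow> real" where
  "sfun n eps mu = eps * max (sqrt (mu * ln (real n))) (ln (real n))"

definition ones_last :: "bool list \<Rightarrow> nat \<Rightarrow> nat" where
  "ones_last H k = length (filter (\<lambda>b. b) (drop (length H - k) H))"
definition zeros_last :: "bool list \<Rightarrow> nat \<Rightarrow> nat" where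
  "zeros_last H k = length (filter (\<lambda>b. \<not> b) (drop (length H - k) H))"

datatype sigres = Up | Down | Stay

definition sig :: "nat \<Rightarrow> real \<Rightarrow> real \<Rightarrow> bool list \<Rightarrow> sigres" where
  "sig n eps p H =
     (if (p = 1 / real n \<or> p = 1/2) \<and>
         (\<exists>m::nat. 2^m \<le> length H \<and>
            real (ones_last H (2^m)) \<ge> 2^m * p + sfun n eps (2^m * p))
      then Up
      else if (p = 1/2 \<or> p = 1 - 1 / real n) \<and>
         (\<exists>m::nat. 2^m \<le> length H \<and>
            real (zeros_last H (2^m)) \<ge> 2^m * (1 - p) + sfun n eps (2^m * (1 - p)))
      then Down
      else Stay)"

fun sample :: "real list \<Rightarrow> bool list pmf" where
  "sample [] = return_pmf []"
| "sample (p # ps) = bind_pmf (bernoulli_pmf p) (\<lambda>b. map_pmf (\<lambda>bs. b # bs) (sample ps))"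

definition winner :: "(bool list \<Rightarrow> nat) \<Rightarrow> bool list \<Rightarrow> bool list \<Rightarrow> bool list pmf" where
  "winner f x y = (if f x > f y then return_pmf x else if f y > f x then return_pmf y
                   else map_pmf (\<lambda>b. if b then x else y) (bernoulli_pmf (1/2)))"

definition upd :: "nat \<Rightarrow> real \<Rightarrow> real \<Rightarrow> bool list \<Rightarrow> bool \<Rightarrow> real \<times> bool list" where
  "upd n eps tau H zi =
     (let H' = H @ [zi];
          tau' = (case sig n eps tau H' of Up \<Rightarrow> 1 - 1 / real n | Down \<Rightarrow> 1 / real n | Stay \<Rightarrow> tau)
      in (tau', if tau' \<noteq> tau then [] else H'))"

definition sig_cga_step :: "nat \<Rightarrow> real \<Rightarrow> real list \<times> bool list list
      \<Rightarrow> ((real list \<times> bool list list) \<times> bool) pmf" where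
  "sig_cga_step n eps st =
     (case st of (taus, Hs) \<Rightarrow>
       bind_pmf (sample taus) (\<lambda>x. bind_pmf (sample taus) (\<lambda>y.
       bind_pmf (winner (DLB n) x y) (\<lambda>z.
         let new = map (\<lambda>i. upd n eps (taus ! i) (Hs ! i) (z ! i)) [0..<n];
             taus' = map fst new; Hs' = map snd new
         in return_pmf ((taus', Hs'), (\<exists>i<n. taus' ! i < taus ! i))))))"

definition sig_cga_init :: "nat \<Rightarrow> real list \<times> bool list list" where
  "sig_cga_init n = (replicate n (1/2), replicate n [])"

fun sig_cga_run :: "nat \<Rightarrow> real \<Rightarrow> nat \<Rightarrow> ((real list \<times> bool list list) \<times> bool) pmf" where
  "sig_cga_run n eps 0 = return_pmf (sig_cga_init n, False)"
| "sig_cga_run n eps (Suc k) =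
     bind_pmf (sig_cga_run n eps k) (\<lambda>(st, d).
       map_pmf (\<lambda>(st', d'). (st', d \<or> d')) (sig_cga_step n eps st))"

end

theory Submission
  imports Defs
begin

definition score :: "bool \<Rightarrow> bool \<Rightarrow> nat" where
  "score a b = (if a \<and> b then 2 else if \<not> a \<and> \<not> b then 1 else 0)"

definition hw :: "bool \<Rightarrow> bool \<Rightarrow> bool \<Rightarrow> bool \<Rightarrow> bool pmf" where
  "hw x1 x2 y1 y2 = (if score x1 x2 > score y1 y2 then return_pmf True
     else if score y1 y2 > score x1 x2 then return_pmf False else bernoulli_pmf (1/2))"

lemma DLB_cons2:
  assumes "even n" "length x = n"
  shows "DLB (Suc (Suc n)) (x1 # x2 # x) =
         (if x1 \<and> x2 then 2 + DLB n x else if \<not> x1 \<and> \<not> x2 then 1 else 0)"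
proof (cases "\<forall>i<Suc (Suc n). (x1 # x2 # x) ! i")
  case True
  then have a: "x1" "x2" "\<forall>i<n. x ! i"
    by (auto dest: spec[of _ 0] spec[of _ 1] simp del: nth_Cons_Suc)
       (metis Suc_less_eq nth_Cons_Suc)
  then have "DLB n x = n" by (simp add: DLB_def)
  moreover have "DLB (Suc (Suc n)) (x1 # x2 # x) = Suc (Suc n)"
    using True unfolding DLB_def by presburger
  ultimately show ?thesis using a by simp
next
  case False
  show ?thesis
  proof (cases "x1 \<and> x2")
    case False
    then have "(LEAST l. l < Suc (Suc n) div 2 \<and> \<not> ((x1 # x2 # x) ! (2*l) \<and> (x1 # x2 # x) ! (2*l+1))) = 0"
      by (intro Least_eq_0) simp
    moreover note nal = \<open>\<not> (\<forall>i<Suc (Suc n). (x1 # x2 # x) ! i)\<close>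
    ultimately have "DLB (Suc (Suc n)) (x1 # x2 # x) = (if \<not> x1 \<and> \<not> x2 then 1 else 0)"
      unfolding DLB_def[of "Suc (Suc n)"] Let_def by (simp only: if_False; simp)
    then show ?thesis using False by simp
  next
    case True
    with False have nall: "\<not> (\<forall>i<n. x ! i)"
      by (auto simp: less_Suc_eq_0_disj)
    then obtain i where i: "i < n" "\<not> x ! i" by auto
    define Q where "Q = (\<lambda>l. l < n div 2 \<and> \<not> (x ! (2*l) \<and> x ! (2*l+1)))"
    define P where "P = (\<lambda>l. l < Suc (Suc n) div 2 \<and> \<not> ((x1 # x2 # x) ! (2*l) \<and> (x1 # x2 # x) ! (2*l+1)))"
    have Qi: "Q (i div 2)"
    proof -
      have "i div 2 < n div 2" using i assms(1) by (auto elim!: evenE)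
      moreover have "i = 2 * (i div 2) \<or> i = 2 * (i div 2) + 1" by presburger
      ultimately show ?thesis using i unfolding Q_def by auto
    qed
    have dv: "Suc (Suc n) div 2 = Suc (n div 2)" by simp
    have PS: "P (Suc l) = Q l" for l
      unfolding P_def Q_def dv by (simp add: numeral_eq_Suc)
    have P0: "\<not> P 0" using True unfolding P_def by simp
    have L: "Least P = Suc (Least Q)"
      by (rule Least_Suc2[of P "Suc (i div 2)" Q "i div 2"]) (use Qi PS P0 in auto)
    have QL: "(x1 # x2 # x) ! (2 * Suc (Least Q)) = x ! (2 * Least Q)"
         "(x1 # x2 # x) ! (2 * Suc (Least Q) + 1) = x ! (2 * Least Q + 1)"
      by (simp_all add: numeral_eq_Suc)
    have D1: "DLB (Suc (Suc n)) (x1 # x2 # x) = (if \<not> x ! (2 * Least Q) \<and> \<not> x ! (2 * Least Q + 1) then 2 * Suc (Least Q) + 1 else 2 * Suc (Least Q))"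
      using False unfolding DLB_def[of "Suc (Suc n)"] Let_def P_def[symmetric] L QL by (simp only: if_False; simp)
    have D2: "DLB n x = (if \<not> x ! (2 * Least Q) \<and> \<not> x ! (2 * Least Q + 1) then 2 * (Least Q) + 1 else 2 * (Least Q))"
      using nall unfolding DLB_def[of n] Let_def Q_def[symmetric] by (simp only: if_False; simp)
    show ?thesis using D1 D2 True by simp
  qed
qed


lemma winner_cons2_else:
  assumes "even n" "length x = n" "length y = n" "\<not> (x1 \<and> x2 \<and> y1 \<and> y2)"
  shows "winner (DLB (Suc (Suc n))) (x1 # x2 # x) (y1 # y2 # y) =
         map_pmf (\<lambda>c. if c then x1 # x2 # x else y1 # y2 # y) (hw x1 x2 y1 y2)"
  using assms(4)
  by (induct x1; induct x2; induct y1; induct y2)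
     (simp_all add: winner_def hw_def score_def DLB_cons2[OF assms(1,2)] DLB_cons2[OF assms(1,3)])

lemma winner_cons2_TT:
  assumes "even n" "length x = n" "length y = n"
  shows "winner (DLB (Suc (Suc n))) (True # True # x) (True # True # y) =
         map_pmf (\<lambda>z. True # True # z) (winner (DLB n) x y)"
  by (auto simp add: winner_def DLB_cons2[OF assms(1,2)] DLB_cons2[OF assms(1,3)] map_pmf_comp
           intro!: map_pmf_cong)

lemma sample_len: "z \<in> set_pmf (sample r) \<Longrightarrow> length z = length r"
  by (induction r arbitrary: z) auto

lemma sample_cons2: "sample (a # b # r) =
   bind_pmf (bernoulli_pmf a) (\<lambda>x1. bind_pmf (bernoulli_pmf b) (\<lambda>x2. map_pmf (\<lambda>t. x1 # x2 # t) (sample r)))"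
  by (simp add: map_bind_pmf map_pmf_comp)

lemma sample_nth: "j < length r \<Longrightarrow> map_pmf (\<lambda>t. t ! j) (sample r) = bernoulli_pmf (r ! j)"
proof (induction r arbitrary: j)
  case Nil then show ?case by simp
next
  case (Cons p ps)
  show ?case
  proof (cases j)
    case 0
    then show ?thesis by (simp add: map_bind_pmf map_pmf_comp bind_return_pmf' flip: map_pmf_def)
  next
    case (Suc j')
    then show ?thesis using Cons by (simp add: map_bind_pmf map_pmf_comp)
  qed
qed

definition Wd :: "nat \<Rightarrow> real list \<Rightarrow> bool list pmf" where
  "Wd n taus = bind_pmf (sample taus) (\<lambda>x. bind_pmf (sample taus) (\<lambda>y. winner (DLB n) x y))"

definition Inner :: "nat \<Rightarrow> real list \<Rightarrow> bool \<Rightarrow> bool \<Rightarrow> bool \<Rightarrow> bool \<Rightarrow> bool list pmf" where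
  "Inner n r x1 x2 y1 y2 = bind_pmf (sample r) (\<lambda>x. bind_pmf (sample r) (\<lambda>y.
      winner (DLB (Suc (Suc n))) (x1 # x2 # x) (y1 # y2 # y)))"

lemma bind_commute3: "bind_pmf A (\<lambda>x. bind_pmf B (\<lambda>y. bind_pmf C (\<lambda>z. F x y z))) =
   bind_pmf B (\<lambda>y. bind_pmf C (\<lambda>z. bind_pmf A (\<lambda>x. F x y z)))"
proof -
  have "bind_pmf A (\<lambda>x. bind_pmf B (\<lambda>y. bind_pmf C (\<lambda>z. F x y z))) =
        bind_pmf B (\<lambda>y. bind_pmf A (\<lambda>x. bind_pmf C (\<lambda>z. F x y z)))"
    by (rule bind_commute_pmf)
  also have "\<dots> = bind_pmf B (\<lambda>y. bind_pmf C (\<lambda>z. bind_pmf A (\<lambda>x. F x y z)))"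
    by (intro bind_pmf_cong refl) (rule bind_commute_pmf)
  finally show ?thesis .
qed

lemma bind_commute3': "bind_pmf A (\<lambda>x. bind_pmf B (\<lambda>y. bind_pmf C (\<lambda>z. F x y z))) =
   bind_pmf C (\<lambda>z. bind_pmf A (\<lambda>x. bind_pmf B (\<lambda>y. F x y z)))"
proof -
  have "bind_pmf A (\<lambda>x. bind_pmf B (\<lambda>y. bind_pmf C (\<lambda>z. F x y z))) =
        bind_pmf A (\<lambda>x. bind_pmf C (\<lambda>z. bind_pmf B (\<lambda>y. F x y z)))"
    by (intro bind_pmf_cong refl) (rule bind_commute_pmf)
  also have "\<dots> = bind_pmf C (\<lambda>z. bind_pmf A (\<lambda>x. bind_pmf B (\<lambda>y. F x y z)))"
    by (rule bind_commute_pmf)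
  finally show ?thesis .
qed

lemma Wd_cons2: "Wd (Suc (Suc n)) (a # b # r) =
  bind_pmf (bernoulli_pmf a) (\<lambda>x1. bind_pmf (bernoulli_pmf b) (\<lambda>x2.
  bind_pmf (bernoulli_pmf a) (\<lambda>y1. bind_pmf (bernoulli_pmf b) (\<lambda>y2. Inner n r x1 x2 y1 y2))))"
  unfolding Wd_def Inner_def sample_cons2
  apply (simp only: bind_assoc_pmf bind_map_pmf)
  apply (rule bind_pmf_cong[OF refl])
  apply (rule bind_pmf_cong[OF refl])
  apply (rule bind_commute3)
  done


lemma Inner_TT:
  assumes "even n" "length r = n"
  shows "Inner n r True True True True = map_pmf (\<lambda>z. True # True # z) (Wd n r)"
  unfolding Inner_def Wd_def map_bind_pmf
  by (intro bind_pmf_cong refl winner_cons2_TT) (auto simp: assms sample_len)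

lemma Inner_else:
  assumes "even n" "length r = n" "\<not> (x1 \<and> x2 \<and> y1 \<and> y2)"
  shows "Inner n r x1 x2 y1 y2 = bind_pmf (hw x1 x2 y1 y2)
           (\<lambda>c. map_pmf (\<lambda>t. if c then x1 # x2 # t else y1 # y2 # t) (sample r))"
proof -
  have "Inner n r x1 x2 y1 y2 = bind_pmf (sample r) (\<lambda>x. bind_pmf (sample r) (\<lambda>y.
      bind_pmf (hw x1 x2 y1 y2) (\<lambda>c. return_pmf (if c then x1 # x2 # x else y1 # y2 # y))))"
    unfolding Inner_def
    by (intro bind_pmf_cong refl)
       (auto simp: winner_cons2_else assms sample_len map_pmf_def)
  also have "\<dots> = bind_pmf (hw x1 x2 y1 y2) (\<lambda>c. bind_pmf (sample r) (\<lambda>x. bind_pmf (sample r) (\<lambda>y.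
       return_pmf (if c then x1 # x2 # x else y1 # y2 # y))))"
    by (rule bind_commute3')
  also have "\<dots> = bind_pmf (hw x1 x2 y1 y2)
           (\<lambda>c. map_pmf (\<lambda>t. if c then x1 # x2 # t else y1 # y2 # t) (sample r))"
  proof (intro bind_pmf_cong refl)
    fix c show "bind_pmf (sample r) (\<lambda>x. bind_pmf (sample r) (\<lambda>y.
       return_pmf (if c then x1 # x2 # x else y1 # y2 # y))) =
       map_pmf (\<lambda>t. if c then x1 # x2 # t else y1 # y2 # t) (sample r)"
      by (cases c) (simp_all add: map_pmf_def)
  qed
  finally show ?thesis .
qed

lemma Bm_tail:
  assumes "even n" "length r = n" "j < n"
  shows "map_pmf (\<lambda>z. z ! Suc (Suc j)) (Wd (Suc (Suc n)) (a # b # r)) =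
   bind_pmf (bernoulli_pmf a) (\<lambda>x1. bind_pmf (bernoulli_pmf b) (\<lambda>x2.
   bind_pmf (bernoulli_pmf a) (\<lambda>y1. bind_pmf (bernoulli_pmf b) (\<lambda>y2.
     if x1 \<and> x2 \<and> y1 \<and> y2 then map_pmf (\<lambda>z. z ! j) (Wd n r) else bernoulli_pmf (r ! j)))))"
  unfolding Wd_cons2 map_bind_pmf
proof (intro bind_pmf_cong refl)
  fix x1 x2 y1 y2
  show "map_pmf (\<lambda>z. z ! Suc (Suc j)) (Inner n r x1 x2 y1 y2) =
      (if x1 \<and> x2 \<and> y1 \<and> y2 then map_pmf (\<lambda>z. z ! j) (Wd n r) else bernoulli_pmf (r ! j))"
  proof (cases "x1 \<and> x2 \<and> y1 \<and> y2")
    case True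
    then show ?thesis using Inner_TT[OF assms(1,2)] by (simp add: map_pmf_comp)
  next
    case False
    have "map_pmf (\<lambda>z. z ! Suc (Suc j)) (Inner n r x1 x2 y1 y2) =
       bind_pmf (hw x1 x2 y1 y2) (\<lambda>c. map_pmf (\<lambda>t. t ! j) (sample r))"
      unfolding Inner_else[OF assms(1,2) False] map_bind_pmf map_pmf_comp
      by (intro bind_pmf_cong refl map_pmf_cong) auto
    then show ?thesis using False sample_nth[of j r] assms by (subst if_not_P[OF False]) simp
  qed
qed

lemma Bm_head:
  assumes "even n" "length r = n"
  shows "map_pmf (\<lambda>z. z ! 0) (Wd (Suc (Suc n)) (a # b # r)) =
   bind_pmf (bernoulli_pmf a) (\<lambda>x1. bind_pmf (bernoulli_pmf b) (\<lambda>x2.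
   bind_pmf (bernoulli_pmf a) (\<lambda>y1. bind_pmf (bernoulli_pmf b) (\<lambda>y2.
     if x1 \<and> x2 \<and> y1 \<and> y2 then return_pmf True
     else bind_pmf (hw x1 x2 y1 y2) (\<lambda>c. return_pmf (if c then x1 else y1))))))"
  unfolding Wd_cons2 map_bind_pmf
proof (intro bind_pmf_cong refl)
  fix x1 x2 y1 y2
  show "map_pmf (\<lambda>z. z ! 0) (Inner n r x1 x2 y1 y2) =
      (if x1 \<and> x2 \<and> y1 \<and> y2 then return_pmf True
       else bind_pmf (hw x1 x2 y1 y2) (\<lambda>c. return_pmf (if c then x1 else y1)))"
  proof (cases "x1 \<and> x2 \<and> y1 \<and> y2")
    case True
    then show ?thesis using Inner_TT[OF assms(1,2)] by (simp add: map_pmf_comp)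
  next
    case False
    show ?thesis
      unfolding Inner_else[OF assms(1,2) False] map_bind_pmf map_pmf_comp using False
      by (auto intro!: bind_pmf_cong simp: map_pmf_def)
  qed
qed

lemma Bm_head1:
  assumes "even n" "length r = n"
  shows "map_pmf (\<lambda>z. z ! 1) (Wd (Suc (Suc n)) (a # b # r)) =
   bind_pmf (bernoulli_pmf a) (\<lambda>x1. bind_pmf (bernoulli_pmf b) (\<lambda>x2.
   bind_pmf (bernoulli_pmf a) (\<lambda>y1. bind_pmf (bernoulli_pmf b) (\<lambda>y2.
     if x1 \<and> x2 \<and> y1 \<and> y2 then return_pmf True
     else bind_pmf (hw x1 x2 y1 y2) (\<lambda>c. return_pmf (if c then x2 else y2))))))"
  unfolding Wd_cons2 map_bind_pmf
proof (intro bind_pmf_cong refl)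
  fix x1 x2 y1 y2
  show "map_pmf (\<lambda>z. z ! 1) (Inner n r x1 x2 y1 y2) =
      (if x1 \<and> x2 \<and> y1 \<and> y2 then return_pmf True
       else bind_pmf (hw x1 x2 y1 y2) (\<lambda>c. return_pmf (if c then x2 else y2)))"
  proof (cases "x1 \<and> x2 \<and> y1 \<and> y2")
    case True
    then show ?thesis using Inner_TT[OF assms(1,2)] by (simp add: map_pmf_comp)
  next
    case False
    show ?thesis
      unfolding Inner_else[OF assms(1,2) False] map_bind_pmf map_pmf_comp using False
      by (auto intro!: bind_pmf_cong simp: map_pmf_def)
  qed
qed

lemma poly_aux:
  fixes a b :: real
  assumes "1/2 \<le> a" "a \<le> 1" "1/2 \<le> b" "b \<le> 1"
  shows "(1 - b / 2) * (1 - a) * (1 - b) * a +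
        (((1 - b) * a / 2 + (1 - a)) * b + ((1 - b) * a + (1 - a)) * (1 - b)) * (1 - a) \<le> 1 - a"
proof -
  define L where "L = (1 - b / 2) * (1 - a) * (1 - b) * a +
        (((1 - b) * a / 2 + (1 - a)) * b + ((1 - b) * a + (1 - a)) * (1 - b)) * (1 - a)"
  define N where "N = a * (1 - a) * (b - (1 - b)^2)"
  have e: "1 - a - L = N" unfolding L_def N_def
    by (simp add: algebra_simps power2_eq_square)
  have "(1 - b) * (1 - b) \<le> 1 * (1 - b)" using assms by (intro mult_right_mono) auto
  then have nn: "0 \<le> N" unfolding N_def
    using assms by (intro mult_nonneg_nonneg) (auto simp: power2_eq_square)
  from e nn have "L \<le> 1 - a" by linarith
  then show ?thesis unfolding L_def .
qed

lemma poly_aux2: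
  fixes a b :: real
  assumes "1/2 \<le> a" "a \<le> 1" "1/2 \<le> b" "b \<le> 1"
  shows "((1 - b) * a + (1 - b / 2) * (1 - a)) * (1 - b) * a +
        (((1 - b) * a / 2 + (1 - b) * (1 - a)) * b +
         ((1 - b) * a + (1 - a)) * (1 - b)) * (1 - a) \<le> 1 - b"
proof -
  define L where "L = ((1 - b) * a + (1 - b / 2) * (1 - a)) * (1 - b) * a +
        (((1 - b) * a / 2 + (1 - b) * (1 - a)) * b +
         ((1 - b) * a + (1 - a)) * (1 - b)) * (1 - a)"
  define N where "N = b * (1 - b) * (a - (1 - a)^2)"
  have e: "1 - b - L = N" unfolding L_def N_def
    by (simp add: algebra_simps power2_eq_square)
  have "(1 - a) * (1 - a) \<le> 1 * (1 - a)" using assms by (intro mult_right_mono) auto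
  then have nn: "0 \<le> N" unfolding N_def
    using assms by (intro mult_nonneg_nonneg) (auto simp: power2_eq_square)
  from e nn have "L \<le> 1 - b" by linarith
  then show ?thesis unfolding L_def .
qed

lemma head_prob:
  assumes "1/2 \<le> a" "a \<le> 1" "1/2 \<le> b" "b \<le> 1"
  shows "pmf (bind_pmf (bernoulli_pmf a) (\<lambda>x1. bind_pmf (bernoulli_pmf b) (\<lambda>x2.
   bind_pmf (bernoulli_pmf a) (\<lambda>y1. bind_pmf (bernoulli_pmf b) (\<lambda>y2.
     if x1 \<and> x2 \<and> y1 \<and> y2 then return_pmf True
     else bind_pmf (hw x1 x2 y1 y2) (\<lambda>c. return_pmf (if c then x1 else y1))))))) False \<le> 1 - a"
proof -
  have [simp]: "0 \<le> a" "0 \<le> b" using assms by auto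
  show ?thesis
    by (rule order.trans[OF _ poly_aux[OF assms]]) (use assms in \<open>simp add: pmf_bind hw_def score_def\<close>)
qed

lemma head1_prob:
  assumes "1/2 \<le> a" "a \<le> 1" "1/2 \<le> b" "b \<le> 1"
  shows "pmf (bind_pmf (bernoulli_pmf a) (\<lambda>x1. bind_pmf (bernoulli_pmf b) (\<lambda>x2.
   bind_pmf (bernoulli_pmf a) (\<lambda>y1. bind_pmf (bernoulli_pmf b) (\<lambda>y2.
     if x1 \<and> x2 \<and> y1 \<and> y2 then return_pmf True
     else bind_pmf (hw x1 x2 y1 y2) (\<lambda>c. return_pmf (if c then x2 else y2))))))) False \<le> 1 - b"
proof -
  have [simp]: "0 \<le> a" "0 \<le> b" using assms by auto
  show ?thesis
    by (rule order.trans[OF _ poly_aux2[OF assms]]) (use assms in \<open>simp add: pmf_bind hw_def score_def\<close>)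
qed

lemma pmf_bind_le:
  assumes "\<And>y. y \<in> set_pmf M \<Longrightarrow> pmf (f y) x \<le> c"
  shows "pmf (bind_pmf M f) x \<le> c"
  unfolding pmf_bind
  by (rule measure_pmf.integral_le_const)
     (auto intro!: measure_pmf.integrable_const_bound[where B=1] AE_pmfI assms simp: pmf_le_1)


lemma dom_aux:
  "length taus = 2 * m \<Longrightarrow> (\<forall>t\<in>set taus. 1/2 \<le> t \<and> t \<le> 1) \<Longrightarrow> i < length taus \<Longrightarrow>
   pmf (map_pmf (\<lambda>z. z ! i) (Wd (length taus) taus)) False \<le> 1 - taus ! i"
proof (induction m arbitrary: taus i)
  case 0 then show ?case by simp
next
  case (Suc m)
  then obtain a b r where t: "taus = a # b # r" and lr: "length r = 2 * m"
    by (cases taus rule: remdups_adj.cases) auto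
  have ab: "1/2 \<le> a" "a \<le> 1" "1/2 \<le> b" "b \<le> 1" using Suc.prems t by auto
  have ev: "even (2 * m)" by simp
  have len: "length taus = Suc (Suc (2 * m))" using t lr by simp
  show ?case
  proof (cases i)
    case 0
    show ?thesis unfolding len unfolding t 0 Bm_head[OF ev lr]
      using head_prob[OF ab] by simp
  next
    case (Suc i')
    show ?thesis
    proof (cases i')
      case 0
      show ?thesis unfolding len unfolding t Suc 0 One_nat_def[symmetric] Bm_head1[OF ev lr]
        using head1_prob[OF ab] by simp
    next
      case (Suc j)
      have j: "j < 2 * m" using Suc.prems(3) \<open>i = Suc i'\<close> Suc len by simp
      have rj: "1/2 \<le> r ! j" "r ! j \<le> 1" using Suc.prems(2) t j lr by auto
      have IH: "pmf (map_pmf (\<lambda>z. z ! j) (Wd (2 * m) r)) False \<le> 1 - r ! j"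
        using Suc.IH[of r j] lr j Suc.prems(2) t by auto
      show ?thesis unfolding len unfolding t \<open>i = Suc i'\<close> Suc Bm_tail[OF ev lr j]
        using IH rj
        by (auto intro!: pmf_bind_le)
    qed
  qed
qed

lemma dom:
  assumes "even (length taus)" "\<forall>t\<in>set taus. 1/2 \<le> t \<and> t \<le> 1" "i < length taus"
  shows "pmf (map_pmf (\<lambda>z. z ! i) (Wd (length taus) taus)) False \<le> 1 - taus ! i"
  using dom_aux[of taus "length taus div 2"] assms by auto

lemma d1: fixes t :: real assumes "0 \<le> t" shows "((\<lambda>t. ln (1 + t) - 2 * t / (2 + t)) has_real_derivative (1 / (1 + t) - 4 / (2 + t)^2)) (at t)"
proof -
  have "((\<lambda>t. ln (1 + t) - 2 * t / (2 + t)) has_real_derivative (1 / (1 + t) - (2 * (2 + t) - 2 * t) / ((2 + t) * (2 + t)))) (at t)"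
    using assms by (intro derivative_eq_intros refl) auto
  moreover have "(2 * (2 + t) - 2 * t) / ((2 + t) * (2 + t)) = 4 / (2 + t)^2"
    by (simp add: power2_eq_square algebra_simps)
  ultimately show ?thesis by simp
qed

lemma ln_lower:
  fixes x :: real
  assumes "0 \<le> x"
  shows "2 * x / (2 + x) \<le> ln (1 + x)"
proof -
  define f where "f = (\<lambda>t::real. ln (1 + t) - 2 * t / (2 + t))"
  have "f 0 \<le> f x"
  proof (rule DERIV_nonneg_imp_nondecreasing[OF assms])
    fix t :: real assume t: "0 \<le> t" "t \<le> x"
    have "(f has_real_derivative (1 / (1 + t) - 4 / (2 + t)^2)) (at t)"
      unfolding f_def using t d1 by simp
    moreover have "1 / (1 + t) - 4 / (2 + t)^2 = t^2 / ((1 + t) * (2 + t)^2)"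
    proof -
      have h: "1 + t \<noteq> 0" "(2 + t)^2 \<noteq> 0" using t by auto
      have "1 / (1 + t) - 4 / (2 + t)^2 = (1 * (2 + t)^2 - 4 * (1 + t)) / ((1 + t) * (2 + t)^2)"
        using h by (rule diff_frac_eq)
      also have "1 * (2 + t)^2 - 4 * (1 + t) = t^2" by (simp add: power2_eq_square algebra_simps)
      finally show ?thesis .
    qed
    moreover have "0 \<le> t^2 / ((1 + t) * (2 + t)^2)" using t by simp
    ultimately show "\<exists>y. (f has_real_derivative y) (at t) \<and> 0 \<le> y" by auto
  qed
  then show ?thesis unfolding f_def by simp
qed

lemma chernoff_num:
  fixes n :: nat and eps p :: real and W :: nat
  assumes n: "2 \<le> n" and e: "3 < eps" and p: "0 \<le> p" "p < 1" and W: "1 \<le> W"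
  defines "\<mu> \<equiv> real W * (1 - p)"
  defines "s \<equiv> sfun n eps \<mu>"
  defines "\<delta> \<equiv> s / \<mu>"
  shows "(p + (1 - p) * exp (ln (1 + \<delta>))) ^ W * exp (- (ln (1 + \<delta>) * (\<mu> + s)))
           \<le> real n powr (- eps / 3)"
proof -
  define L where "L = ln (real n)"
  have L: "0 < L" unfolding L_def using n by simp
  have mu: "0 < \<mu>" unfolding \<mu>_def using p W by simp
  have s1: "eps * L \<le> s" unfolding s_def sfun_def L_def using e by (intro mult_left_mono) auto
  have s2: "eps * sqrt (\<mu> * L) \<le> s" unfolding s_def sfun_def L_def using e by (intro mult_left_mono) auto
  have spos: "0 < s" using s1 L e by (smt (verit) mult_pos_pos)
  have dpos: "0 < \<delta>" unfolding \<delta>_def using spos mu by simp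
  have sd: "\<mu> * \<delta> = s" unfolding \<delta>_def using mu by simp
  have c: "p + (1 - p) * exp (ln (1 + \<delta>)) = 1 + (1 - p) * \<delta>"
    using dpos by (simp add: algebra_simps)
  have "(1 + (1 - p) * \<delta>) ^ W \<le> exp ((1 - p) * \<delta>) ^ W"
    using p dpos by (intro power_mono) (auto simp: exp_ge_add_one_self)
  also have "\<dots> = exp (\<mu> * \<delta>)"
    unfolding \<mu>_def by (simp add: exp_of_nat_mult[symmetric] algebra_simps)
  finally have cW: "(1 + (1 - p) * \<delta>) ^ W \<le> exp s" using sd by simp
  have lnb: "2 * \<delta> / (2 + \<delta>) \<le> ln (1 + \<delta>)" using ln_lower dpos by simp
  have ms: "\<mu> + s = \<mu> * (1 + \<delta>)" using sd by (simp add: algebra_simps)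
  have "2 * \<delta> / (2 + \<delta>) * (\<mu> + s) \<le> ln (1 + \<delta>) * (\<mu> + s)"
    using lnb mu spos by (intro mult_right_mono) auto
  moreover have "2 * \<delta> / (2 + \<delta>) * (\<mu> + s) = s + s * \<delta> / (2 + \<delta>)"
    unfolding ms sd[symmetric] using dpos mu by (simp add: field_simps power2_eq_square)
  ultimately have key1: "s - ln (1 + \<delta>) * (\<mu> + s) \<le> - (s * \<delta> / (2 + \<delta>))" by linarith
  have key2: "eps * L / 3 \<le> s * \<delta> / (2 + \<delta>)"
  proof (cases "1 \<le> \<delta>")
    case True
    have "s / 3 \<le> s * \<delta> / (2 + \<delta>)" using True spos by (simp add: field_simps)
    then show ?thesis using s1 by linarith
  next
    case False
    have "s * \<delta> / 3 \<le> s * \<delta> / (2 + \<delta>)"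
      using False spos dpos by (intro divide_left_mono) (auto intro: mult_pos_pos)
    moreover have "s * \<delta> = s^2 / \<mu>" unfolding \<delta>_def by (simp add: power2_eq_square)
    moreover have "(eps * sqrt (\<mu> * L))^2 \<le> s^2"
      using s2 e mu L by (intro power_mono) auto
    then have "eps^2 * (\<mu> * L) \<le> s^2" using mu L by (simp add: power_mult_distrib)
    then have "eps^2 * L \<le> s^2 / \<mu>" using mu by (simp add: field_simps)
    moreover have "eps * L \<le> eps^2 * L" using e L by (simp add: power2_eq_square)
    ultimately show ?thesis by (smt (verit) divide_right_mono)
  qed
  have "(p + (1 - p) * exp (ln (1 + \<delta>))) ^ W * exp (- (ln (1 + \<delta>) * (\<mu> + s)))
        \<le> exp s * exp (- (ln (1 + \<delta>) * (\<mu> + s)))"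
    unfolding c using cW by (intro mult_right_mono) auto
  also have "\<dots> = exp (s - ln (1 + \<delta>) * (\<mu> + s))" by (simp add: exp_add[symmetric])
  also have "\<dots> \<le> exp (- eps / 3 * L)" using key1 key2 by simp
  also have "\<dots> = real n powr (- eps / 3)" unfolding L_def powr_def using n by simp
  finally show ?thesis .
qed

definition G :: "nat \<Rightarrow> real \<Rightarrow> real list \<Rightarrow> bool list list \<Rightarrow> bool list \<Rightarrow> (real list \<times> bool list list) \<times> bool" where
  "G n eps taus Hs z = (let new = map (\<lambda>i. upd n eps (taus ! i) (Hs ! i) (z ! i)) [0..<n];
             taus' = map fst new; Hs' = map snd new
         in ((taus', Hs'), (\<exists>i<n. taus' ! i < taus ! i)))"

lemma step_eq: "sig_cga_step n eps (taus, Hs) = map_pmf (G n eps taus Hs) (Wd n taus)"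
  unfolding sig_cga_step_def Wd_def G_def
  by (simp add: map_bind_pmf map_pmf_def bind_assoc_pmf Let_def)

lemma G_simps:
  assumes "i < n"
  shows "fst (fst (G n eps taus Hs z)) ! i = fst (upd n eps (taus ! i) (Hs ! i) (z ! i))"
        "snd (fst (G n eps taus Hs z)) ! i = snd (upd n eps (taus ! i) (Hs ! i) (z ! i))"
  using assms by (simp_all add: G_def Let_def)

lemma G_len: "length (fst (fst (G n eps taus Hs z))) = n" "length (snd (fst (G n eps taus Hs z))) = n"
  by (simp_all add: G_def Let_def)

lemma G_dec: "snd (G n eps taus Hs z) = (\<exists>i<n. fst (upd n eps (taus ! i) (Hs ! i) (z ! i)) < taus ! i)"
  by (auto simp add: G_def Let_def)

lemma upd_fst: "fst (upd n eps t H b) = 1 - 1 / real n \<or> fst (upd n eps t H b) = 1 / real n \<or> fst (upd n eps t H b) = t"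
  by (simp add: upd_def Let_def split: sigres.split)

lemma upd_snd: "snd (upd n eps t H b) = (if fst (upd n eps t H b) \<noteq> t then [] else H @ [b])"
  by (simp add: upd_def Let_def)

lemma upd_dec:
  assumes "fst (upd n eps t H b) < t" "t \<le> 1 - 1 / real n"
  shows "\<exists>m::nat. 2^m \<le> length (H @ [b]) \<and>
            real (zeros_last (H @ [b]) (2^m)) \<ge> 2^m * (1 - t) + sfun n eps (2^m * (1 - t))"
proof (cases "sig n eps t (H @ [b])")
  case Up then show ?thesis using assms by (simp add: upd_def Let_def)
next
  case Stay then show ?thesis using assms by (simp add: upd_def Let_def)
next
  case Down
  then show ?thesis unfolding sig_def by (auto split: if_splits)
qed

definition invS :: "nat \<Rightarrow> nat \<Rightarrow> (real list \<times> bool list list) \<times> bool \<Rightarrow> bool" where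
  "invS n u s = (case s of ((taus, Hs), d) \<Rightarrow> length taus = n \<and> length Hs = n \<and>
      (\<forall>j<n. length (Hs ! j) \<le> u) \<and> (\<not> d \<longrightarrow> (\<forall>j<n. taus ! j = 1/2 \<or> taus ! j = 1 - 1 / real n)))"

lemma run_Suc_set:
  assumes "s \<in> set_pmf (sig_cga_run n eps (Suc u))"
  obtains taus Hs d z where "((taus, Hs), d) \<in> set_pmf (sig_cga_run n eps u)"
     "z \<in> set_pmf (Wd n taus)"
     "s = (fst (G n eps taus Hs z), d \<or> snd (G n eps taus Hs z))"
proof -
  from assms obtain st d where A: "(st, d) \<in> set_pmf (sig_cga_run n eps u)"
    and B: "s \<in> set_pmf (map_pmf (\<lambda>(st', d'). (st', d \<or> d')) (sig_cga_step n eps st))"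
    by auto
  obtain taus Hs where st: "st = (taus, Hs)" by (cases st)
  have "s \<in> (\<lambda>z. (\<lambda>(st', d'). (st', d \<or> d')) (G n eps taus Hs z)) ` set_pmf (Wd n taus)"
    using B unfolding st step_eq map_pmf_comp by simp
  then obtain z where z: "z \<in> set_pmf (Wd n taus)"
     and "s = (\<lambda>(st', d'). (st', d \<or> d')) (G n eps taus Hs z)"
    by blast
  then have "s = (fst (G n eps taus Hs z), d \<or> snd (G n eps taus Hs z))"
    by (simp add: case_prod_beta)
  with A st z that show ?thesis by blast
qed

lemma inv_run:
  assumes "even n" "0 < n"
  shows "s \<in> set_pmf (sig_cga_run n eps u) \<Longrightarrow> invS n u s"
proof (induction u arbitrary: s)
  case 0
  then show ?case by (simp add: invS_def sig_cga_init_def)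
next
  case (Suc u)
  obtain taus Hs d z where A: "((taus, Hs), d) \<in> set_pmf (sig_cga_run n eps u)"
     "z \<in> set_pmf (Wd n taus)"
     and s: "s = (fst (G n eps taus Hs z), d \<or> snd (G n eps taus Hs z))"
    using run_Suc_set[OF Suc.prems] by blast
  have I: "invS n u ((taus, Hs), d)" using Suc.IH A(1) by blast
  have n2: "2 \<le> n" using assms by (auto elim: evenE)
  show ?case
  proof -
    have l1: "\<forall>j<n. length (snd (fst (G n eps taus Hs z)) ! j) \<le> Suc u"
    proof (intro allI impI)
      fix j assume j: "j < n"
      have "length (snd (upd n eps (taus ! j) (Hs ! j) (z ! j))) \<le> Suc (length (Hs ! j))"
        by (subst upd_snd) simp
      then show "length (snd (fst (G n eps taus Hs z)) ! j) \<le> Suc u"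
        using I j G_simps(2)[OF j] unfolding invS_def by fastforce
    qed
    have l2: "\<forall>j<n. fst (fst (G n eps taus Hs z)) ! j = 1/2 \<or> fst (fst (G n eps taus Hs z)) ! j = 1 - 1 / real n"
      if nd: "\<not> (d \<or> snd (G n eps taus Hs z))"
    proof (intro allI impI)
      fix j assume j: "j < n"
      have t: "taus ! j = 1/2 \<or> taus ! j = 1 - 1 / real n" using I nd j unfolding invS_def by auto
      have nl: "\<not> fst (upd n eps (taus ! j) (Hs ! j) (z ! j)) < taus ! j"
        using nd j unfolding G_dec by auto
      define q where "q = 1 / real n"
      have "1 / real n \<le> 1 / 2" using n2 by (simp add: field_simps)
      moreover note upd_fst[of n eps "taus ! j" "Hs ! j" "z ! j"] t nl
      ultimately have "fst (upd n eps (taus ! j) (Hs ! j) (z ! j)) = 1/2 \<or>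
                 fst (upd n eps (taus ! j) (Hs ! j) (z ! j)) = 1 - 1 / real n"
        unfolding q_def[symmetric] by linarith
      then show "fst (fst (G n eps taus Hs z)) ! j = 1/2 \<or> fst (fst (G n eps taus Hs z)) ! j = 1 - 1 / real n"
        using G_simps(1)[OF j] by simp
    qed
    obtain t' H' where tH: "fst (G n eps taus Hs z) = (t', H')" by (cases "fst (G n eps taus Hs z)")
    have "length t' = n" "length H' = n" using G_len[of n eps taus Hs z] tH by auto
    then show ?thesis using l1 l2 unfolding s invS_def tH by simp
  qed
qed


definition cc :: "(real \<Rightarrow> real) \<Rightarrow> real \<Rightarrow> real" where
  "cc lamf p = p + (1 - p) * exp (lamf p)"

definition Psi :: "nat \<Rightarrow> (real \<Rightarrow> real) \<Rightarrow> nat \<Rightarrow> (real list \<times> bool list list) \<times> bool \<Rightarrow> ennreal" where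
  "Psi i lamf l s = (case s of ((taus, Hs), d) \<Rightarrow>
     if \<not> d \<and> l \<le> length (Hs ! i)
     then ennreal (exp (lamf (taus ! i) * real (zeros_last (Hs ! i) l)) / cc lamf (taus ! i) ^ l)
     else 0)"

lemma cc_pos: "0 \<le> p \<Longrightarrow> p \<le> 1 \<Longrightarrow> 0 < p \<or> p < 1 \<Longrightarrow> 0 < cc lamf p"
  unfolding cc_def by (smt (verit, best) exp_gt_zero mult_pos_pos mult_nonneg_nonneg)

lemma mgf:
  assumes "even n" "length taus = n" "\<forall>t\<in>set taus. 1/2 \<le> t \<and> t \<le> 1" "i < n" "0 \<le> lam"
  shows "(\<integral>\<^sup>+z. ennreal (exp (lam * (if z ! i then 0 else 1)) / (taus ! i + (1 - taus ! i) * exp lam)) \<partial>Wd n taus) \<le> 1"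
proof -
  define t where "t = taus ! i"
  have t: "1/2 \<le> t" "t \<le> 1" using assms(2-4) unfolding t_def by auto
  define E where "E = exp lam"
  have E: "1 \<le> E" unfolding E_def using assms(5) by simp
  define c where "c = t + (1 - t) * E"
  have "0 \<le> (1 - t) * E" using t E by simp
  then have c: "0 < c" unfolding c_def using t by linarith
  define B where "B = map_pmf (\<lambda>z. z ! i) (Wd n taus)"
  define P where "P = pmf B False"
  have P: "P \<le> 1 - t" unfolding P_def B_def t_def using dom[of taus i] assms by simp
  have P0: "0 \<le> P" unfolding P_def by simp
  have T: "pmf B True = 1 - P" unfolding P_def by (simp add: pmf_False_conv_True)
  have "(\<integral>\<^sup>+z. ennreal (exp (lam * (if z ! i then 0 else 1)) / c) \<partial>Wd n taus)
        = (\<integral>\<^sup>+b. ennreal (exp (lam * (if b then 0 else 1)) / c) \<partial>B)"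
    unfolding B_def by simp
  also have "\<dots> = (\<Sum>b\<in>UNIV. ennreal (exp (lam * (if b then 0 else 1)) / c) * ennreal (pmf B b))"
    by (rule nn_integral_measure_pmf_support) auto
  also have "\<dots> = ennreal (1 / c) * ennreal (1 - P) + ennreal (E / c) * ennreal P"
    by (simp add: UNIV_bool T P_def E_def)
  also have "\<dots> = ennreal (1 / c * (1 - P)) + ennreal (E / c * P)"
  proof -
    have e1: "ennreal (1 / c) * ennreal (1 - P) = ennreal (1 / c * (1 - P))"
      by (rule ennreal_mult[symmetric]) (use c P t in auto)
    have e2: "ennreal (E / c) * ennreal P = ennreal (E / c * P)"
      by (rule ennreal_mult[symmetric]) (use c P0 E in auto)
    show ?thesis by (simp only: e1 e2)
  qed
  also have "\<dots> = ennreal (1 / c * (1 - P) + E / c * P)"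
    using c P0 P t E by (intro ennreal_plus[symmetric]) auto
  also have "\<dots> \<le> ennreal 1"
  proof (rule ennreal_leI)
    have "(E - 1) * P \<le> (E - 1) * (1 - t)" using E P by (intro mult_left_mono) auto
    then have "(1 - P) + E * P \<le> c" unfolding c_def by (simp add: algebra_simps)
    moreover have "1 / c * (1 - P) + E / c * P = ((1 - P) + E * P) / c" by (simp add: add_divide_distrib)
    ultimately show "1 / c * (1 - P) + E / c * P \<le> 1" using c by simp
  qed
  finally show ?thesis unfolding c_def t_def E_def by simp
qed


lemma zeros_last_snoc:
  "l \<le> length H \<Longrightarrow> zeros_last (H @ [b]) (Suc l) = zeros_last H l + (if b then 0 else 1)"
  unfolding zeros_last_def by (simp add: drop_append)

lemma Psi_alt: "Psi i lamf l s = (if \<not> snd s \<and> l \<le> length (snd (fst s) ! i)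
   then ennreal (exp (lamf (fst (fst s) ! i) * real (zeros_last (snd (fst s) ! i) l)) / cc lamf (fst (fst s) ! i) ^ l)
   else 0)"
  by (cases s) (auto simp: Psi_def split: prod.split)

lemma invS_taus:
  assumes "invS n u ((taus, Hs), False)" "2 \<le> n"
  shows "\<forall>t\<in>set taus. 1/2 \<le> t \<and> t \<le> 1" "length taus = n" "length Hs = n"
proof -
  have "1 / real n \<le> 1 / 2" using assms(2) by (simp add: field_simps)
  show "\<forall>t\<in>set taus. 1/2 \<le> t \<and> t \<le> 1"
  proof
    fix t assume "t \<in> set taus"
    then obtain j where j: "j < length taus" "t = taus ! j" by (auto simp: in_set_conv_nth)
    then have "taus ! j = 1/2 \<or> taus ! j = 1 - 1 / real n" using assms(1) unfolding invS_def by auto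
    moreover have "0 \<le> 1 / real n" by simp
    ultimately show "1/2 \<le> t \<and> t \<le> 1" using \<open>1 / real n \<le> 1 / 2\<close> j by auto
  qed
  show "length taus = n" "length Hs = n" using assms(1) unfolding invS_def by auto
qed

lemma Psi_step:
  assumes "even n" "0 < n" "invS n u ((taus, Hs), d)" "i < n" "\<forall>p. 0 \<le> lamf p"
  shows "(\<integral>\<^sup>+s'. Psi i lamf (Suc l) (fst s', d \<or> snd s') \<partial>sig_cga_step n eps (taus, Hs))
          \<le> Psi i lamf l ((taus, Hs), d)"
proof (cases "\<not> d \<and> l \<le> length (Hs ! i)")
  case False
  have "Psi i lamf (Suc l) (fst (G n eps taus Hs z), d \<or> snd (G n eps taus Hs z)) = 0" for z
  proof -
    have "length (snd (upd n eps (taus ! i) (Hs ! i) (z ! i))) \<le> Suc (length (Hs ! i))"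
      by (subst upd_snd) simp
    then show ?thesis using False unfolding Psi_alt by (auto simp: G_simps[OF assms(4)])
  qed
  then show ?thesis unfolding step_eq by simp
next
  case True
  have n2: "2 \<le> n" using assms by (auto elim: evenE)
  have nd: "\<not> d" using True by simp
  have d0: "invS n u ((taus, Hs), False)" using assms(3) nd by simp
  note tI = invS_taus[OF d0 n2]
  define t where "t = taus ! i"
  define H where "H = Hs ! i"
  define lam where "lam = lamf t"
  define c where "c = cc lamf t"
  have t: "1/2 \<le> t" "t \<le> 1" using tI assms(4) unfolding t_def by auto
  have c: "0 < c" unfolding c_def using t by (intro cc_pos) auto
  have lam: "0 \<le> lam" using assms(5) unfolding lam_def by simp
  define R where "R = exp (lam * real (zeros_last H l)) / c ^ l"
  have R: "0 \<le> R" unfolding R_def using c by simp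
  have rhs: "Psi i lamf l ((taus, Hs), d) = ennreal R"
    using True unfolding Psi_def R_def lam_def c_def t_def H_def by simp
  have pw: "Psi i lamf (Suc l) (fst (G n eps taus Hs z), d \<or> snd (G n eps taus Hs z))
        \<le> ennreal R * ennreal (exp (lam * (if z ! i then 0 else 1)) / (t + (1 - t) * exp lam))" for z
  proof (cases "\<not> (d \<or> snd (G n eps taus Hs z)) \<and> Suc l \<le> length (snd (upd n eps t H (z ! i)))")
    case False
    then show ?thesis unfolding Psi_alt by (auto simp: G_simps[OF assms(4)] t_def H_def)
  next
    case True2: True
    define u' where "u' = upd n eps t H (z ! i)"
    have ne: "snd u' \<noteq> []" using True2 unfolding u'_def by auto
    then have f: "fst u' = t" and sn: "snd u' = H @ [z ! i]"
      using upd_snd[of n eps t H "z ! i"] unfolding u'_def by (auto split: if_splits)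
    have lH: "l \<le> length H" using True unfolding H_def by simp
    have "Psi i lamf (Suc l) (fst (G n eps taus Hs z), d \<or> snd (G n eps taus Hs z))
        = ennreal (exp (lam * real (zeros_last (H @ [z ! i]) (Suc l))) / c ^ Suc l)"
      using True2 unfolding Psi_alt
      by (simp add: G_simps[OF assms(4)] t_def[symmetric] H_def[symmetric] u'_def[symmetric] f sn lam_def c_def)
    also have "exp (lam * real (zeros_last (H @ [z ! i]) (Suc l))) / c ^ Suc l
        = R * (exp (lam * (if z ! i then 0 else 1)) / c)"
      unfolding zeros_last_snoc[OF lH] R_def
      by (simp add: algebra_simps exp_add[symmetric] mult_exp_exp)
    also have "ennreal (R * (exp (lam * (if z ! i then 0 else 1)) / c))
       = ennreal R * ennreal (exp (lam * (if z ! i then 0 else 1)) / c)"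
      using R c by (intro ennreal_mult) auto
    finally show ?thesis unfolding c_def cc_def lam_def by simp
  qed
  have "(\<integral>\<^sup>+s'. Psi i lamf (Suc l) (fst s', d \<or> snd s') \<partial>sig_cga_step n eps (taus, Hs))
     = (\<integral>\<^sup>+z. Psi i lamf (Suc l) (fst (G n eps taus Hs z), d \<or> snd (G n eps taus Hs z)) \<partial>Wd n taus)"
    unfolding step_eq by simp
  also have "\<dots> \<le> (\<integral>\<^sup>+z. ennreal R * ennreal (exp (lam * (if z ! i then 0 else 1)) / (t + (1 - t) * exp lam)) \<partial>Wd n taus)"
    by (intro nn_integral_mono pw)
  also have "\<dots> = ennreal R * (\<integral>\<^sup>+z. ennreal (exp (lam * (if z ! i then 0 else 1)) / (t + (1 - t) * exp lam)) \<partial>Wd n taus)"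
    by (rule nn_integral_cmult) simp
  also have "\<dots> \<le> ennreal R * 1"
    unfolding t_def
    by (intro mult_left_mono mgf) (use assms tI lam in \<open>auto simp: t_def\<close>)
  finally show ?thesis using rhs by simp
qed

lemma run_integral:
  "(\<integral>\<^sup>+s. f s \<partial>sig_cga_run n eps (Suc u)) =
   (\<integral>\<^sup>+x. (\<integral>\<^sup>+s'. f (fst s', snd x \<or> snd s') \<partial>sig_cga_step n eps (fst x)) \<partial>sig_cga_run n eps u)"
  by (simp add: case_prod_beta)

lemma E_Psi:
  assumes "even n" "0 < n" "i < n" "\<forall>p. 0 \<le> lamf p"
  shows "(\<integral>\<^sup>+s. Psi i lamf l s \<partial>sig_cga_run n eps u) \<le> 1"
  using assms(1) [[goals_limit = 1]]
proof (induction u arbitrary: l)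
  case 0
  then show ?case using assms(3) by (simp add: Psi_def sig_cga_init_def zeros_last_def)
next
  case (Suc u)
  show ?case
  proof (cases l)
    case 0
    have "(\<integral>\<^sup>+s. Psi i lamf l s \<partial>sig_cga_run n eps (Suc u)) \<le> (\<integral>\<^sup>+s. 1 \<partial>sig_cga_run n eps (Suc u))"
      by (intro nn_integral_mono) (simp add: Psi_alt 0 zeros_last_def)
    then show ?thesis by simp
  next
    case (Suc l')
    have "(\<integral>\<^sup>+s. Psi i lamf l s \<partial>sig_cga_run n eps (Suc u))
       \<le> (\<integral>\<^sup>+x. Psi i lamf l' x \<partial>sig_cga_run n eps u)"
      unfolding run_integral Suc
    proof (intro nn_integral_mono_AE AE_pmfI)
      fix x assume x: "x \<in> set_pmf (sig_cga_run n eps u)"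
      obtain taus Hs d where xe: "x = ((taus, Hs), d)" by (cases x) auto
      have I: "invS n u ((taus, Hs), d)" using inv_run[OF assms(1,2) x] xe by simp
      show "(\<integral>\<^sup>+s'. Psi i lamf (Suc l') (fst s', snd x \<or> snd s') \<partial>sig_cga_step n eps (fst x))
            \<le> Psi i lamf l' x"
        unfolding xe using Psi_step[OF assms(1,2) I assms(3,4)] by simp
    qed
    also have "\<dots> \<le> 1" by (rule Suc.IH) (rule assms(1))
    finally show ?thesis .
  qed
qed

definition lamf :: "nat \<Rightarrow> real \<Rightarrow> nat \<Rightarrow> real \<Rightarrow> real" where
  "lamf n eps m p = ln (1 + max 0 (sfun n eps (2^m * (1 - p)) / (2^m * (1 - p))))"

lemma lamf_nonneg: "\<forall>p. 0 \<le> lamf n eps m p"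
  unfolding lamf_def by simp

lemma chern_apply:
  fixes C lam A Z \<beta> :: real
  assumes "0 < C" "C * exp (- (lam * A)) \<le> \<beta>" "A \<le> Z" "0 \<le> lam"
  shows "1 \<le> \<beta> * (exp (lam * Z) / C)"
proof -
  have "exp (lam * A) \<le> exp (lam * Z)" using assms(3,4) by (simp add: mult_left_mono)
  have "C = C * exp (- (lam * A)) * exp (lam * A)" by (simp add: exp_minus field_simps)
  also have "\<dots> \<le> \<beta> * exp (lam * A)" using assms(2) by (intro mult_right_mono) auto
  also have "\<dots> \<le> \<beta> * exp (lam * Z)"
    using \<open>exp (lam * A) \<le> exp (lam * Z)\<close> assms
    by (smt (verit) exp_gt_zero mult_pos_pos mult_left_mono mult_nonneg_nonneg)
  finally have "C \<le> \<beta> * exp (lam * Z)" .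
  then show ?thesis using assms(1) by (simp add: field_simps)
qed

lemma ennreal_mult3: "0 \<le> x \<Longrightarrow> 0 \<le> y \<Longrightarrow> 0 \<le> z \<Longrightarrow>
   ennreal x * ennreal y * ennreal z = ennreal (x * y * z)"
  by (simp add: ennreal_mult)

lemma ln2_ge: "2/3 \<le> ln (2::real)"
  using ln_lower[of 1] by simp

lemma dec_step:
  assumes "even n" "0 < n" "3 < eps" "invS n u ((taus, Hs), False)"
      "\<forall>j<n. Suc (length (Hs ! j)) < 2 ^ Suc K"
  shows "(\<integral>\<^sup>+s'. indicator {s'. snd s'} s' \<partial>sig_cga_step n eps (taus, Hs))
     \<le> (\<Sum>j<n. \<Sum>m\<in>{1..K}. ennreal (real n powr (- eps / 3)) * Psi j (lamf n eps m) (2^m - 1) ((taus, Hs), False))"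
proof -
  define \<beta> where "\<beta> = real n powr (- eps / 3)"
  have \<beta>: "0 \<le> \<beta>" unfolding \<beta>_def by simp
  have n2: "2 \<le> n" using assms by (auto elim: evenE)
  note tI = invS_taus[OF assms(4) n2]
  define E where "E j m z = ennreal (exp (lamf n eps m (taus ! j) * (if z ! j then 0 else 1)) /
        (taus ! j + (1 - taus ! j) * exp (lamf n eps m (taus ! j))))" for j m and z :: "bool list"
  have pw: "indicator {s'. snd s'} (G n eps taus Hs z) \<le>
      (\<Sum>j<n. \<Sum>m\<in>{1..K}. ennreal \<beta> * Psi j (lamf n eps m) (2^m - 1) ((taus, Hs), False) * E j m z)" for z
  proof (cases "snd (G n eps taus Hs z)")
    case False then show ?thesis by simp
  next
    case True
    then obtain j where j: "j < n" and dec: "fst (upd n eps (taus ! j) (Hs ! j) (z ! j)) < taus ! j"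
      unfolding G_dec by auto
    define t where "t = taus ! j"
    define H where "H = Hs ! j"
    define b where "b = z ! j"
    have tv: "t = 1/2 \<or> t = 1 - 1 / real n" using assms(4) j unfolding invS_def t_def by auto
    have h: "1 / real n \<le> 1 / 2" "0 < 1 / real n" using n2 by (auto simp: field_simps)
    have t1: "t \<le> 1 - 1 / real n" "1/2 \<le> t" "t < 1" using tv h by (elim disjE; linarith)+
    obtain m where m1: "2^m \<le> length (H @ [b])"
       and m2: "real (zeros_last (H @ [b]) (2^m)) \<ge> 2^m * (1 - t) + sfun n eps (2^m * (1 - t))"
      using upd_dec[OF dec[folded t_def H_def b_def] t1(1)] by blast
    have "ln (2::real) \<le> ln (real n)" using n2 by simp
    then have L: "2/3 \<le> ln (real n)" using ln2_ge by linarith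
    have sge: "eps * ln (real n) \<le> sfun n eps \<mu>" for \<mu>
      unfolding sfun_def using assms(3) by (intro mult_left_mono) auto
    have m0: "m \<noteq> 0"
    proof
      assume "m = 0"
      then have "real (zeros_last (H @ [b]) 1) \<ge> (1 - t) + sfun n eps (1 - t)" using m2 by simp
      moreover have "zeros_last (H @ [b]) 1 \<le> 1" unfolding zeros_last_def by simp
      moreover have "3 * (2/3) \<le> eps * ln (real n)"
        by (rule mult_mono) (use L assms(3) in auto)
      ultimately show False using sge[of "1 - t"] t1 by linarith
    qed
    have mK: "m \<le> K"
    proof -
      have "Suc (length H) < 2 ^ Suc K" using assms(5) j unfolding H_def by blast
      then have p: "(2::nat)^m < 2 ^ Suc K" using m1 by simp
      have "m < Suc K" by (rule power_less_imp_less_exp[of 2, OF _ p]) simp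
      then show ?thesis by simp
    qed
    define W where "W = (2::nat)^m"
    have W1: "1 \<le> W" unfolding W_def by simp
    have WH: "W - 1 \<le> length H" using m1 unfolding W_def by simp
    have SW: "Suc (W - 1) = W" using W1 by simp
    define lam where "lam = lamf n eps m t"
    define c where "c = cc (lamf n eps m) t"
    have c: "0 < c" unfolding c_def using t1 by (intro cc_pos) auto
    define \<mu> where "\<mu> = real W * (1 - t)"
    have mu: "0 < \<mu>" unfolding \<mu>_def using t1 W1 by simp
    define s where "s = sfun n eps \<mu>"
    have "0 \<le> eps * ln (real n)" using L assms(3) by simp
    then have "0 \<le> s" unfolding s_def using sge[of \<mu>] by linarith
    then have lamd: "lam = ln (1 + s / \<mu>)" unfolding lam_def lamf_def s_def \<mu>_def W_def
      using mu by (simp add: \<mu>_def W_def)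
    have lam0: "0 \<le> lam" unfolding lam_def using lamf_nonneg by simp
    have ch: "(t + (1 - t) * exp lam) ^ W * exp (- (lam * (\<mu> + s))) \<le> \<beta>"
      unfolding lamd \<beta>_def s_def \<mu>_def
      using chernoff_num[OF n2 assms(3) _ t1(3) W1] t1 by simp
    have Zthr: "\<mu> + s \<le> real (zeros_last (H @ [b]) W)"
      using m2 unfolding \<mu>_def s_def W_def by simp
    have ceq: "c = t + (1 - t) * exp lam" unfolding c_def cc_def lam_def by simp
    have ch': "c ^ W * exp (- (lam * (\<mu> + s))) \<le> \<beta>" using ch unfolding ceq .
    have one: "1 \<le> \<beta> * (exp (lam * real (zeros_last (H @ [b]) W)) / c ^ W)"
      by (rule chern_apply[OF _ ch' Zthr lam0]) (use c in simp)
    have Zs: "zeros_last (H @ [b]) W = zeros_last H (W - 1) + (if b then 0 else 1)"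
      using zeros_last_snoc[OF WH, of b] SW by simp
    have R0: "0 \<le> exp (lam * real (zeros_last H (W - 1))) / c ^ (W - 1)" using c by simp
    have E0: "0 \<le> exp (lam * (if b then 0 else 1)) / c" using c by simp
    have "ennreal \<beta> * Psi j (lamf n eps m) (2^m - 1) ((taus, Hs), False) * E j m z
       = ennreal \<beta> * ennreal (exp (lam * real (zeros_last H (W - 1))) / c ^ (W - 1)) *
         ennreal (exp (lam * (if b then 0 else 1)) / c)"
      using WH unfolding Psi_def E_def W_def
      by (simp add: t_def H_def b_def lam_def c_def cc_def)
    also have "\<dots> = ennreal (\<beta> * (exp (lam * real (zeros_last H (W - 1))) / c ^ (W - 1)) *
         (exp (lam * (if b then 0 else 1)) / c))"
      by (rule ennreal_mult3[OF \<beta> R0 E0])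
    also have "\<beta> * (exp (lam * real (zeros_last H (W - 1))) / c ^ (W - 1)) *
         (exp (lam * (if b then 0 else 1)) / c) = \<beta> * (exp (lam * real (zeros_last (H @ [b]) W)) / c ^ W)"
      unfolding Zs using W1 c
      by (cases W) (auto simp: algebra_simps mult_exp_exp)
    finally have term1: "1 \<le> ennreal \<beta> * Psi j (lamf n eps m) (2^m - 1) ((taus, Hs), False) * E j m z"
      using one by (simp add: ennreal_1[symmetric] del: ennreal_1)
    have "ennreal \<beta> * Psi j (lamf n eps m) (2^m - 1) ((taus, Hs), False) * E j m z
        \<le> (\<Sum>m\<in>{1..K}. ennreal \<beta> * Psi j (lamf n eps m) (2^m - 1) ((taus, Hs), False) * E j m z)"
      using m0 mK by (intro member_le_sum) auto
    also have "\<dots> \<le> (\<Sum>j<n. \<Sum>m\<in>{1..K}. ennreal \<beta> * Psi j (lamf n eps m) (2^m - 1) ((taus, Hs), False) * E j m z)"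
      using j by (intro member_le_sum[of j "{..<n}"]) auto
    finally show ?thesis using term1 True by simp
  qed
  have "(\<integral>\<^sup>+s'. indicator {s'. snd s'} s' \<partial>sig_cga_step n eps (taus, Hs))
     = (\<integral>\<^sup>+z. indicator {s'. snd s'} (G n eps taus Hs z) \<partial>Wd n taus)"
    unfolding step_eq by simp
  also have "\<dots> \<le> (\<integral>\<^sup>+z. (\<Sum>j<n. \<Sum>m\<in>{1..K}. ennreal \<beta> * Psi j (lamf n eps m) (2^m - 1) ((taus, Hs), False) * E j m z) \<partial>Wd n taus)"
    by (intro nn_integral_mono pw)
  also have "\<dots> = (\<Sum>j<n. \<Sum>m\<in>{1..K}. ennreal \<beta> * Psi j (lamf n eps m) (2^m - 1) ((taus, Hs), False) * (\<integral>\<^sup>+z. E j m z \<partial>Wd n taus))"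
    by (simp add: nn_integral_sum nn_integral_cmult)
  also have "\<dots> \<le> (\<Sum>j<n. \<Sum>m\<in>{1..K}. ennreal \<beta> * Psi j (lamf n eps m) (2^m - 1) ((taus, Hs), False) * 1)"
  proof (intro sum_mono mult_left_mono)
    fix j m assume j: "j \<in> {..<n}"
    show "(\<integral>\<^sup>+z. E j m z \<partial>Wd n taus) \<le> 1"
      unfolding E_def using j tI assms(1) lamf_nonneg
      by (intro mgf) auto
  qed simp
  finally show ?thesis unfolding \<beta>_def by simp
qed


lemma main_bound:
  assumes "even n" "0 < n" "3 < eps" "k < 2 ^ Suc K"
  shows "u \<le> k \<Longrightarrow> (\<integral>\<^sup>+s. indicator {s. snd s} s \<partial>sig_cga_run n eps u)
           \<le> ennreal (real u * (real n * real K * real n powr (- eps / 3)))"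
proof (induction u)
  case 0
  then show ?case by simp
next
  case (Suc u)
  define \<beta> where "\<beta> = real n powr (- eps / 3)"
  have \<beta>: "0 \<le> \<beta>" unfolding \<beta>_def by simp
  define F where "F x = indicator {s. snd s} x +
      (\<Sum>j<n. \<Sum>m\<in>{1..K}. ennreal \<beta> * Psi j (lamf n eps m) (2^m - 1) x)" for x
  have "(\<integral>\<^sup>+s. indicator {s. snd s} s \<partial>sig_cga_run n eps (Suc u))
     \<le> (\<integral>\<^sup>+x. F x \<partial>sig_cga_run n eps u)"
    unfolding run_integral
  proof (intro nn_integral_mono_AE AE_pmfI)
    fix x assume x: "x \<in> set_pmf (sig_cga_run n eps u)"
    obtain taus Hs d where xe: "x = ((taus, Hs), d)" by (cases x) auto
    have I: "invS n u ((taus, Hs), d)" using inv_run[OF assms(1,2) x] xe by simp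
    show "(\<integral>\<^sup>+s'. indicator {s. snd s} (fst s', snd x \<or> snd s') \<partial>sig_cga_step n eps (fst x)) \<le> F x"
    proof (cases d)
      case True
      have "(\<integral>\<^sup>+s'. indicator {s. snd s} (fst s', snd x \<or> snd s') \<partial>sig_cga_step n eps (fst x)) = 1"
        using True xe by simp
      also have "1 \<le> F x" unfolding F_def using True xe by simp
      finally show ?thesis .
    next
      case False
      have len: "\<forall>j<n. Suc (length (Hs ! j)) < 2 ^ Suc K"
        using I Suc.prems assms(4) unfolding invS_def by fastforce
      have "(\<integral>\<^sup>+s'. indicator {s. snd s} (fst s', snd x \<or> snd s') \<partial>sig_cga_step n eps (fst x))
         = (\<integral>\<^sup>+s'. indicator {s'. snd s'} s' \<partial>sig_cga_step n eps (taus, Hs))"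
        using False xe by (simp add: indicator_def)
      also have "\<dots> \<le> (\<Sum>j<n. \<Sum>m\<in>{1..K}. ennreal \<beta> * Psi j (lamf n eps m) (2^m - 1) ((taus, Hs), False))"
      proof -
        have I0: "invS n u ((taus, Hs), False)" using I False by simp
        show ?thesis unfolding \<beta>_def using dec_step[OF assms(1,2,3) I0 len] .
      qed
      also have "\<dots> \<le> F x" using False unfolding F_def xe by simp
      finally show ?thesis .
    qed
  qed
  also have "\<dots> = (\<integral>\<^sup>+x. indicator {s. snd s} x \<partial>sig_cga_run n eps u) +
      (\<Sum>j<n. \<Sum>m\<in>{1..K}. ennreal \<beta> * (\<integral>\<^sup>+x. Psi j (lamf n eps m) (2^m - 1) x \<partial>sig_cga_run n eps u))"
    unfolding F_def by (simp add: nn_integral_add nn_integral_sum nn_integral_cmult)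
  also have "\<dots> \<le> ennreal (real u * (real n * real K * \<beta>)) + (\<Sum>j<n. \<Sum>m\<in>{1..K}. ennreal \<beta> * 1)"
  proof (intro add_mono sum_mono mult_left_mono)
    show "(\<integral>\<^sup>+x. indicator {s. snd s} x \<partial>sig_cga_run n eps u) \<le> ennreal (real u * (real n * real K * \<beta>))"
      using Suc.IH Suc.prems unfolding \<beta>_def by simp
  next
    fix j m assume "j \<in> {..<n}"
    then show "(\<integral>\<^sup>+x. Psi j (lamf n eps m) (2^m - 1) x \<partial>sig_cga_run n eps u) \<le> 1"
      using E_Psi[OF assms(1,2) _ lamf_nonneg] by simp
  qed simp
  also have "(\<Sum>j<n. \<Sum>m\<in>{1..K}. ennreal \<beta> * 1) = ennreal (real n * real K * \<beta>)"
    using \<beta> by (simp add: ennreal_of_nat_eq_real_of_nat ennreal_mult mult.assoc)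
  also have "ennreal (real u * (real n * real K * \<beta>)) + ennreal (real n * real K * \<beta>)
      = ennreal (real (Suc u) * (real n * real K * \<beta>))"
    using \<beta> by (simp add: ennreal_plus[symmetric] algebra_simps del: ennreal_plus)
  finally show ?case unfolding \<beta>_def .
qed

theorem lemma23:
  fixes n k :: nat and eps :: real
  assumes "even n" and "n > 0" and "eps > 3"
  shows "measure_pmf.prob (sig_cga_run n eps k) {(st, d). d}
           \<le> real k * real n powr (1 - eps / 3) * log 2 (real k)"
proof (cases "k = 0")
  case True
  then show ?thesis by simp
next
  case False
  define K where "K = nat \<lfloor>log 2 (real k)\<rfloor>"
  have k1: "1 \<le> real k" using False by simp
  have lg0: "0 \<le> log 2 (real k)" using k1 by simp
  have KL: "real K \<le> log 2 (real k)" unfolding K_def using lg0 by linarith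
  have "log 2 (real k) < real (Suc K)" unfolding K_def using lg0 by linarith
  then have "2 powr log 2 (real k) < 2 powr real (Suc K)" by (intro powr_less_mono) auto
  moreover have "2 powr log 2 (real k) = real k" using k1 by simp
  moreover have "(2::real) powr real (Suc K) = 2 ^ Suc K" by (rule powr_realpow) simp
  ultimately have "real k < 2 ^ Suc K" by simp
  then have kK: "k < 2 ^ Suc K" by (metis of_nat_less_iff of_nat_numeral of_nat_power)
  define \<beta> where "\<beta> = real n powr (- eps / 3)"
  have \<beta>: "0 \<le> \<beta>" unfolding \<beta>_def by simp
  have set_eq: "{(st, d). d} = {s :: (real list \<times> bool list list) \<times> bool. snd s}" by auto
  have "ennreal (measure_pmf.prob (sig_cga_run n eps k) {(st, d). d})
      = (\<integral>\<^sup>+s. indicator {s. snd s} s \<partial>sig_cga_run n eps k)"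
    unfolding set_eq by (simp add: measure_pmf.emeasure_eq_measure[symmetric])
  also have "\<dots> \<le> ennreal (real k * (real n * real K * \<beta>))"
    unfolding \<beta>_def by (rule main_bound[OF assms(1,2,3) kK]) simp
  finally have P: "measure_pmf.prob (sig_cga_run n eps k) {(st, d). d} \<le> real k * (real n * real K * \<beta>)"
    using \<beta> by (simp add: ennreal_le_iff)
  have "real n powr (1 + (- eps / 3)) = real n powr 1 * real n powr (- eps / 3)" by (rule powr_add)
  then have nb: "real n * \<beta> = real n powr (1 - eps / 3)"
    unfolding \<beta>_def using assms(2) by simp
  have "real k * (real n * real K * \<beta>) = real k * (real n * \<beta>) * real K" by (simp add: algebra_simps)
  also have "\<dots> \<le> real k * (real n * \<beta>) * log 2 (real k)"
    using KL \<beta> by (intro mult_left_mono) auto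
  finally show ?thesis using P nb by simp
qed

end
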